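(* Let $w\in\mathcal{W}^o_n$ and let $(O,E)\to(O',E')$ be one application of the step $(\psi)$ during the computation of $\Psi(w)$. Then $(O,E)$ is obtained from $(O',E')$ by applying one step $(\omega)$.
   Context: Fix a finite totally ordered alphabet $A$. Words are finite sequences over $A$; $-$ is the empty word. $<$ is lexicographic order (a proper prefix is smaller than the word); $\infty$ is a formal symbol with $w<\infty$ for all words $w$. A Lyndon word is a nonempty word strictly smaller than each of its proper nonempty suffixes. Every word has a unique Lyndon factorization $w=\ell_1\cdots\ell_m$ into Lyndon words with $\ell_1\ge\dots\ge\ell_m$, written $\ell_1|\cdots|\ell_m$. Odd/even refer to lengths. For a Lyndon word $\ell$ with $|\ell|\ge2$, its standard factorization is $\ell=rs$ with $s$ the longest proper suffix of $\ell$ that is Lyndon (equivalently the smallest proper nonempty suffix). $\mathcal{W}^o_n$: words of length $n$ whose Lyndon factors are all odd and pairwise distinct. Step $(\psi)$ on a pair of words $(O,E)$ with $|O|\ge2$ (as used in computing $\Psi(w)$, which starts from $(w,-)$ and iterates $(\psi)$ while $|O|\ge2$): let $O=o_1|\cdots|o_m$ (with $o_{m-1}=\infty$ if $m=1$); $o_m$ is splittable if $|o_m|\ge2$ and its standard factorization $o_m=rs$ satisfies $s<o_{m-1}$. Update to: (S) $(o_1\cdots o_{m-1}r,\ sE)$ if splittable and $r$ odd; (P) $(o_1\cdots o_{m-1}s,\ rE)$ if splittable and $r$ even; (F) $(o_1\cdots o_{m-2},\ o_mo_{m-1}E)$ if not splittable. Iterated standard factorization (ISF) of a Lyndon word $\ell$,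 $|\ell|\ge2$, with respect to $u$ (a word or $\infty$): the unique factorization $\ell=r_js_js_{j-1}\cdots s_1$, $j\ge1$, such that (a) for every $i\in[j]$, $s_i$ is the smallest proper nonempty suffix of $r_js_j\cdots s_i$; (b) for $i\in[j-1]$, $s_i$ is even and $s_i<u$; (c) $s_j$ is odd or $u\le s_j$. Step $(\omega)$ on a pair $(O',E')$ with $E'$ nonempty: let $O'=o'_1|\cdots|o'_h$ and $E'=e'_1|\cdots|e'_k$ be Lyndon factorizations (with $o'_h=\infty$ if $O'$ is empty). If $o'_h<e'_1$, update to (S') $(O'e'_1,\ e'_2\cdots e'_k)$. Otherwise let $e'_1=r_js_js_{j-1}\cdots s_1$ be the ISF of $e'_1$ with respect to $o'_h$ and update to (P') $(o'_1\cdots o'_{h-1}r_js_jo'_h,\ s_{j-1}\cdots s_1e'_2\cdots e'_k)$ if $o'_h\le s_j$, or to (F') $(O's_jr_j,\ s_{j-1}\cdots s_1e'_2\cdots e'_k)$ if $s_j<o'_h$. *)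

theory Defs
  imports Main
begin

text \<open>Words over a finite totally ordered alphabet are lists of type 'a list with
'a :: {linorder, finite}.  The formal symbol infinity is modelled by None in
'a list option (Some v is the word v).\<close>

definition lex_less :: "'a::linorder list \<Rightarrow> 'a list \<Rightarrow> bool" where
  "lex_less u v \<longleftrightarrow>
     (\<exists>z. z \<noteq> [] \<and> v = u @ z) \<or>
     (\<exists>p a b x y. u = p @ a # x \<and> v = p @ b # y \<and> a < b)"

definition lex_le :: "'a::linorder list \<Rightarrow> 'a list \<Rightarrow> bool" where
  "lex_le u v \<longleftrightarrow> lex_less u v \<or> u = v"

fun less_inf :: "'a::linorder list \<Rightarrow> 'a list option \<Rightarrow> bool" where
  "less_inf u None = True"
| "less_inf u (Some v) = lex_less u v"

fun inf_less :: "'a::linorder list option \<Rightarrow> 'a list \<Rightarrow> bool" where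
  "inf_less None v = False"
| "inf_less (Some u) v = lex_less u v"

fun inf_le :: "'a::linorder list option \<Rightarrow> 'a list \<Rightarrow> bool" where
  "inf_le None v = False"
| "inf_le (Some u) v = lex_le u v"

definition lyndon :: "'a::linorder list \<Rightarrow> bool" where
  "lyndon w \<longleftrightarrow> w \<noteq> [] \<and> (\<forall>k. 0 < k \<and> k < length w \<longrightarrow> lex_less w (drop k w))"

definition is_lyndon_fact :: "'a::linorder list \<Rightarrow> 'a list list \<Rightarrow> bool" where
  "is_lyndon_fact w fs \<longleftrightarrow> concat fs = w \<and> (\<forall>f\<in>set fs. lyndon f) \<and>
     (\<forall>i. Suc i < length fs \<longrightarrow> lex_le (fs ! Suc i) (fs ! i))"

definition lfact :: "'a::linorder list \<Rightarrow> 'a list list" where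
  "lfact w = (THE fs. is_lyndon_fact w fs)"

definition std_split :: "'a::linorder list \<Rightarrow> 'a list \<times> 'a list" where
  "std_split l = (let k = (LEAST k. 0 < k \<and> k < length l \<and> lyndon (drop k l))
                  in (take k l, drop k l))"

definition Wo :: "nat \<Rightarrow> 'a::linorder list set" where
  "Wo n = {w. length w = n \<and> (\<forall>f\<in>set (lfact w). odd (length f)) \<and> distinct (lfact w)}"

definition psi :: "'a::linorder list \<times> 'a list \<Rightarrow> 'a list \<times> 'a list" where
  "psi OE = (let Ow = fst OE; Ew = snd OE; fs = lfact Ow; m = length fs; om = last fs;
                 prev = (if m = 1 then None else Some (fs ! (m - 2)));
                 r = fst (std_split om); s = snd (std_split om);
                 splittable = (2 \<le> length om \<and> less_inf s prev)
             in if splittable \<and> odd (length r) then (concat (butlast fs) @ r, s @ Ew)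
                else if splittable then (concat (butlast fs) @ s, r @ Ew)
                else (concat (take (m - 2) fs), om @ fs ! (m - 2) @ Ew))"

inductive psi_run :: "'a::linorder list \<Rightarrow> 'a list \<times> 'a list \<Rightarrow> bool" for w where
  start: "psi_run w (w, [])"
| step: "psi_run w (Ow, Ew) \<Longrightarrow> 2 \<le> length Ow \<Longrightarrow> psi_run w (psi (Ow, Ew))"

definition min_suffix :: "'a::linorder list \<Rightarrow> 'a list \<Rightarrow> bool" where
  "min_suffix x s \<longleftrightarrow> (\<exists>k. 0 < k \<and> k < length x \<and> s = drop k x) \<and>
     (\<forall>k. 0 < k \<and> k < length x \<longrightarrow> lex_le s (drop k x))"

text \<open>Iterated standard factorization l = r_j s_j s_(j-1) ... s_1 w.r.t. u
  (u = None means infinity).  ss = [s_j, s_(j-1), ..., s_1], so ss ! t = s_(j-t)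
  and r_j s_j ... s_(j-t) = r @ concat (take (Suc t) ss).\<close>

definition isf :: "'a::linorder list option \<Rightarrow> 'a list \<Rightarrow> 'a list \<Rightarrow> 'a list list \<Rightarrow> bool" where
  "isf u l r ss \<longleftrightarrow> lyndon l \<and> 2 \<le> length l \<and> ss \<noteq> [] \<and> l = r @ concat ss \<and>
     (\<forall>t < length ss. min_suffix (r @ concat (take (Suc t) ss)) (ss ! t)) \<and>
     (\<forall>t. 0 < t \<and> t < length ss \<longrightarrow> even (length (ss ! t)) \<and> less_inf (ss ! t) u) \<and>
     (odd (length (ss ! 0)) \<or> inf_le u (ss ! 0))"

definition omega_step :: "'a::linorder list \<times> 'a list \<Rightarrow> 'a list \<times> 'a list \<Rightarrow> bool" where
  "omega_step P Q \<longleftrightarrow> snd P \<noteq> [] \<and>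
    (let Op = fst P; Ep = snd P; os = lfact Op; es = lfact Ep; h = length os;
         oh = (if h = 0 then None else Some (last os)); e1 = hd es
     in if inf_less oh e1 then Q = (Op @ e1, concat (tl es))
        else (\<exists>r ss. isf oh e1 r ss \<and>
               (if inf_le oh (hd ss)
                then Q = (concat (butlast os) @ r @ hd ss @ the oh, concat (tl ss) @ concat (tl es))
                else Q = (Op @ hd ss @ r, concat (tl ss) @ concat (tl es)))))"

end

theory Submission
  imports Defs "HOL-Library.List_Lexorder"
begin


lemma lex_less_iff[simp]: "lex_less u v \<longleftrightarrow> u < v"
  unfolding lex_less_def list_less_def lexord_def
  by (auto simp: neq_Nil_conv) blast+

lemma lex_le_iff[simp]: "lex_le u v \<longleftrightarrow> u \<le> v"
  unfolding lex_le_def list_le_def by simp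

lemma app_less_app_iff[simp]: "(p @ u < p @ v) = (u < v)" for u v :: "'a::linorder list"
  by (induct p) auto

lemma prefix_less: "z \<noteq> [] \<Longrightarrow> u < u @ z" for u z :: "'a::linorder list"
  by (induct u) (auto simp: neq_Nil_conv)

lemma le_append_right: "v \<le> y \<Longrightarrow> v \<le> y @ z" for v y z :: "'a::linorder list"
proof (induct v arbitrary: y)
  case Nil then show ?case by simp
next
  case (Cons a v) then show ?case by (cases y) auto
qed

lemma less_append_notprefix: "u < v \<Longrightarrow> \<not>(\<exists>z. v = u @ z) \<Longrightarrow> u @ x < v @ y"
  for u v x y :: "'a::linorder list"
proof (induct u arbitrary: v)
  case Nil then show ?case by simp
next
  case (Cons a u) then show ?case by (cases v) auto
qed

lemma less_append_notprefix1: "u < v \<Longrightarrow> \<not>(\<exists>z. v = u @ z) \<Longrightarrow> u @ x < v"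
  for u v x :: "'a::linorder list"
  using less_append_notprefix[of u v x "[]"] by simp

lemma lyndon_drop: "lyndon l \<Longrightarrow> 0 < k \<Longrightarrow> k < length l \<Longrightarrow> l < drop k l"
  unfolding lyndon_def by simp

lemma lyndon_ne: "lyndon l \<Longrightarrow> l \<noteq> []"
  unfolding lyndon_def by simp

lemma lyndon_suffix_ge: "lyndon l \<Longrightarrow> k < length l \<Longrightarrow> l \<le> drop k l"
  by (cases "k = 0") (auto dest: lyndon_drop)

lemma lyndon_single: "lyndon [a]"
  unfolding lyndon_def by auto

lemma lemK:
  fixes P s e :: "'a::linorder list"
  assumes "lyndon s" "P \<noteq> []" "P < s" "e \<le> s"
  shows "P @ e < s"
proof (cases "\<exists>z. s = P @ z")
  case True
  then obtain z where z: "s = P @ z" by blast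
  with assms have "z \<noteq> []" by auto
  then have "s < drop (length P) s"
    using assms z by (intro lyndon_drop) auto
  then have "s < z" using z by simp
  then have "e < z" using assms(4) by simp
  then show ?thesis using z by simp
next
  case False
  then show ?thesis using less_append_notprefix1 assms by blast
qed

lemma lyndon_app:
  fixes u v :: "'a::linorder list"
  assumes u: "lyndon u" and v: "lyndon v" and uv: "u < v"
  shows "lyndon (u @ v)"
proof -
  have une: "u \<noteq> []" using u lyndon_ne by blast
  have vne: "v \<noteq> []" using v lyndon_ne by blast
  have key: "u @ v < v"
  proof (cases "\<exists>z. v = u @ z")
    case True
    then obtain z where z: "v = u @ z" by blast
    with uv have "z \<noteq> []" by auto
    then have "v < drop (length u) v" using v z une by (intro lyndon_drop) auto
    then have "u @ z < z" using z by simp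
    then show ?thesis using z by simp
  next
    case False then show ?thesis using less_append_notprefix1 uv by blast
  qed
  show ?thesis unfolding lyndon_def lex_less_iff
  proof (intro conjI allI impI)
    show "u @ v \<noteq> []" using une by simp
    fix k assume k: "0 < k \<and> k < length (u @ v)"
    consider "k < length u" | "k = length u" | "k > length u" by linarith
    then show "u @ v < drop k (u @ v)"
    proof cases
      case 1
      have "u < drop k u" using u k 1 lyndon_drop by blast
      moreover have "\<not>(\<exists>z. drop k u = u @ z)"
      proof
        assume "\<exists>z. drop k u = u @ z"
        then obtain z where "drop k u = u @ z" by blast
        then have "length (drop k u) \<ge> length u" by simp
        then show False using k 1 by simp
      qed
      ultimately have "u @ v < drop k u @ v" by (rule less_append_notprefix)
      then show ?thesis using 1 by simp
    next
      case 2 then show ?thesis using key by simp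
    next
      case 3
      have "v < drop (k - length u) v" using v k 3 by (intro lyndon_drop) auto
      moreover have "drop k (u @ v) = drop (k - length u) v" using 3 by simp
      ultimately show ?thesis using key by (metis order.strict_trans)
    qed
  qed
qed


lemma prefix_le: "u \<le> u @ z" for u z :: "'a::linorder list"
  by (cases "z = []") (auto intro: order.strict_implies_order prefix_less)

definition lf_ok :: "'a::linorder list \<Rightarrow> 'a list list \<Rightarrow> bool" where
  "lf_ok w fs \<longleftrightarrow> concat fs = w \<and> (\<forall>f\<in>set fs. lyndon f) \<and> sorted_wrt (\<lambda>x y. y \<le> x) fs"

lemma is_lf_iff: "is_lyndon_fact w fs \<longleftrightarrow> lf_ok w fs"
proof -
  have "transp (\<lambda>x y::'a list. y \<le> x)" by (auto simp: transp_def)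
  then show ?thesis unfolding is_lyndon_fact_def lf_ok_def
    by (simp add: sorted_wrt_iff_nth_Suc_transp)
qed

lemma lemJ:
  fixes c q t :: "'a::linorder list"
  shows "\<forall>g\<in>set gs. g \<le> c \<Longrightarrow> q \<noteq> [] \<Longrightarrow> q @ t = concat gs \<Longrightarrow> \<exists>y x. x \<noteq> [] \<and> q = y @ x \<and> x \<le> c"
proof (induct gs arbitrary: q t)
  case Nil then show ?case by simp
next
  case (Cons g gs)
  from Cons.prems(3) have "q @ t = g @ concat gs" by simp
  then obtain us where us: "(q = g @ us \<and> us @ t = concat gs) \<or> (q @ us = g \<and> t = us @ concat gs)"
    by (auto simp: append_eq_append_conv2)
  then show ?case
  proof
    assume a: "q = g @ us \<and> us @ t = concat gs"
    show ?thesis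
    proof (cases "us = []")
      case True
      then have "q = g" using a by simp
      then show ?thesis using Cons.prems by (intro exI[of _ "[]"] exI[of _ q]) auto
    next
      case False
      from Cons.hyps[of us t] Cons.prems a False obtain y x where "x \<noteq> [] \<and> us = y @ x \<and> x \<le> c"
        by auto
      then show ?thesis using a by (intro exI[of _ "g @ y"] exI[of _ x]) auto
    qed
  next
    assume a: "q @ us = g \<and> t = us @ concat gs"
    then have "q \<le> g" using prefix_le by blast
    then have "q \<le> c" using Cons.prems(1) by auto
    then show ?thesis using Cons.prems by (intro exI[of _ "[]"] exI[of _ q]) auto
  qed
qed

lemma lf_longest:
  assumes ok: "lf_ok w (f # fs)" and p: "lyndon p" and w: "w = p @ t"
  shows "length p \<le> length f"
proof (rule ccontr)
  assume long: "\<not> length p \<le> length f"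
  from ok w have "p @ t = f @ concat fs" by (simp add: lf_ok_def)
  then obtain us where us: "(p = f @ us \<and> us @ t = concat fs) \<or> (p @ us = f \<and> t = us @ concat fs)"
    by (auto simp: append_eq_append_conv2)
  with long have a: "p = f @ us" "us @ t = concat fs" by auto
  with long have une: "us \<noteq> []" by auto
  have "\<forall>g\<in>set fs. g \<le> f" using ok by (simp add: lf_ok_def)
  from lemJ[OF this une a(2)] obtain y x where yx: "x \<noteq> []" "us = y @ x" "x \<le> f" by blast
  have fne: "f \<noteq> []" using ok lyndon_ne by (auto simp: lf_ok_def)
  have "p < drop (length f + length y) p"
    using p a yx fne by (intro lyndon_drop) auto
  then have "p < x" using a yx by simp
  moreover have "f < p" using a une prefix_less by blast
  ultimately show False using yx(3) by simp
qed

lemma lf_unique: "lf_ok w fs \<Longrightarrow> lf_ok w gs \<Longrightarrow> fs = gs"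
proof (induct fs arbitrary: w gs)
  case Nil
  then have "w = []" by (simp add: lf_ok_def)
  then have "\<forall>g\<in>set gs. g = []" using Nil.prems(2) by (simp add: lf_ok_def)
  moreover have "\<forall>g\<in>set gs. g \<noteq> []" using Nil.prems(2) lyndon_ne by (auto simp: lf_ok_def)
  ultimately show ?case by (cases gs) auto
next
  case (Cons f fs)
  have fne: "f \<noteq> []" using Cons.prems lyndon_ne by (auto simp: lf_ok_def)
  then have "w \<noteq> []" using Cons.prems by (auto simp: lf_ok_def)
  then obtain g gs' where g: "gs = g # gs'" using Cons.prems(2) by (cases gs) (auto simp: lf_ok_def)
  have lg: "lyndon g" "lyndon f" using Cons.prems g by (auto simp: lf_ok_def)
  have w1: "w = g @ concat gs'" "w = f @ concat fs" using Cons.prems g by (auto simp: lf_ok_def)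
  have "length g \<le> length f" using lf_longest[OF Cons.prems(1) lg(1) w1(1)] .
  moreover have "length f \<le> length g" using lf_longest[OF Cons.prems(2)[unfolded g] lg(2) w1(2)] .
  ultimately have "length f = length g" by simp
  with w1 have fg: "f = g" "concat fs = concat gs'" by (auto simp: append_eq_append_conv)
  have "lf_ok (concat fs) fs" "lf_ok (concat fs) gs'" using Cons.prems g fg by (auto simp: lf_ok_def)
  with Cons.hyps have "fs = gs'" by blast
  then show ?case using g fg by simp
qed

fun mrg :: "'a::linorder list \<Rightarrow> 'a list list \<Rightarrow> 'a list list" where
  "mrg u [] = [u]"
| "mrg u (e # es) = (if u < e then mrg (u @ e) es else u # e # es)"

lemma mrg_ok: "lyndon u \<Longrightarrow> lf_ok E es \<Longrightarrow> lf_ok (u @ E) (mrg u es)"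
proof (induct u es arbitrary: E rule: mrg.induct)
  case (1 u) then show ?case by (simp add: lf_ok_def)
next
  case (2 u e es)
  show ?case
  proof (cases "u < e")
    case True
    have "lyndon (u @ e)" using 2 True lyndon_app by (auto simp: lf_ok_def)
    moreover have "lf_ok (concat es) es" using 2(3) by (simp add: lf_ok_def)
    ultimately have "lf_ok ((u @ e) @ concat es) (mrg (u @ e) es)" using 2(1) True by blast
    then show ?thesis using True 2(3) by (simp add: lf_ok_def)
  next
    case False
    then have eu: "e \<le> u" by simp
    have "\<forall>x\<in>set es. x \<le> e" using 2(3) by (simp add: lf_ok_def)
    then have "\<forall>x\<in>set es. x \<le> u" using eu by auto
    then show ?thesis using False eu 2 by (auto simp: lf_ok_def)
  qed
qed

lemma mrg_form: "\<exists>i \<le> length es. mrg u es = (u @ concat (take i es)) # drop i es"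
proof (induct u es rule: mrg.induct)
  case (1 u) then show ?case by simp
next
  case (2 u e es)
  show ?case
  proof (cases "u < e")
    case True
    with 2 obtain i where "i \<le> length es" "mrg (u @ e) es = (u @ e @ concat (take i es)) # drop i es"
      by auto
    then show ?thesis using True by (intro exI[of _ "Suc i"]) auto
  next
    case False then show ?thesis by (intro exI[of _ 0]) auto
  qed
qed

lemma lf_exists: "\<exists>fs. lf_ok w fs"
proof (induct w)
  case Nil then show ?case by (intro exI[of _ "[]"]) (simp add: lf_ok_def)
next
  case (Cons a w)
  then obtain fs where "lf_ok w fs" by blast
  from mrg_ok[OF lyndon_single this] show ?case by auto
qed

lemma lfact_eq: "lf_ok w fs \<Longrightarrow> lfact w = fs"
  unfolding lfact_def is_lf_iff by (rule the_equality) (auto intro: lf_unique)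

lemma lfact_ok: "lf_ok w (lfact w)"
  using lf_exists lfact_eq by metis




lemma drop_len1: "l \<noteq> [] \<Longrightarrow> drop (length l - 1) l = [last l]"
  by (cases l rule: rev_cases) auto

lemma std_split_props:
  fixes l r s :: "'a::linorder list"
  assumes ly: "lyndon l" and len: "2 \<le> length l" and sp: "std_split l = (r, s)"
  shows "l = r @ s" "r \<noteq> []" "s \<noteq> []" "lyndon s"
    "\<forall>k. 0 < k \<and> k < length l \<longrightarrow> s \<le> drop k l"
    "\<forall>k. 0 < k \<and> k < length r \<longrightarrow> s \<le> drop k r"
    "lyndon r" "r < s"
proof -
  define P where "P k \<longleftrightarrow> 0 < k \<and> k < length l \<and> lyndon (drop k l)" for k
  define k0 where "k0 = (LEAST k. P k)"
  have lne: "l \<noteq> []" using len by auto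
  have a: "drop (length l - 1) l = [last l]" using drop_len1[OF lne] .
  have P1: "P (length l - 1)" unfolding P_def using len a by (simp add: lyndon_single)
  have Pk0: "P k0" unfolding k0_def using P1 by (rule LeastI)
  have k0min: "\<And>k. P k \<Longrightarrow> k0 \<le> k" unfolding k0_def by (rule Least_le)
  have "std_split l = (take k0 l, drop k0 l)" unfolding std_split_def k0_def P_def Let_def by simp
  then have rs: "r = take k0 l" "s = drop k0 l" using sp by auto
  show lrs: "l = r @ s" using rs by simp
  show rne: "r \<noteq> []" using rs Pk0 unfolding P_def by auto
  show sne: "s \<noteq> []" using rs Pk0 unfolding P_def by auto
  show lys: "lyndon s" using rs Pk0 unfolding P_def by auto
  define S where "S = (\<lambda>k. drop k l) ` {k. 0 < k \<and> k < length l}"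
  have finS: "finite S" unfolding S_def by simp
  have sS: "s \<in> S" unfolding S_def using rs Pk0 unfolding P_def by blast
  then have neS: "S \<noteq> {}" by auto
  define M where "M = Min S"
  have MS: "M \<in> S" unfolding M_def using finS neS by (rule Min_in)
  have Mmin: "\<And>x. x \<in> S \<Longrightarrow> M \<le> x" unfolding M_def using finS by (rule Min_le)
  from MS obtain k1 where k1: "0 < k1" "k1 < length l" "M = drop k1 l" unfolding S_def by blast
  have lyM: "lyndon M" unfolding lyndon_def lex_less_iff
  proof (intro conjI allI impI)
    show "M \<noteq> []" using k1 by simp
    fix j assume j: "0 < j \<and> j < length M"
    have "drop j M = drop (k1 + j) l" using k1 by (simp add: add.commute)
    moreover have "drop (k1 + j) l \<in> S" unfolding S_def using j k1 by (intro image_eqI[of _ _ "k1+j"]) auto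
    ultimately have "M \<le> drop j M" using Mmin by simp
    moreover have "length (drop j M) \<noteq> length M" using j by auto
    then have "M \<noteq> drop j M" by metis
    ultimately show "M < drop j M" by simp
  qed
  have "k0 \<le> k1" using k0min[of k1] k1 lyM unfolding P_def by simp
  have "k0 = k1"
  proof (rule ccontr)
    assume "k0 \<noteq> k1"
    with \<open>k0 \<le> k1\<close> have lt: "k0 < k1" by simp
    have "M = drop (k1 - k0) s" using rs k1 lt by simp
    moreover have "s < drop (k1 - k0) s" using lys lt rs k1 by (intro lyndon_drop) auto
    ultimately have "s < M" by simp
    with Mmin[OF sS] show False by simp
  qed
  then have sM: "s = M" using rs k1 by simp
  show smin: "\<forall>k. 0 < k \<and> k < length l \<longrightarrow> s \<le> drop k l"
  proof (intro allI impI)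
    fix k assume "0 < k \<and> k < length l"
    then have "drop k l \<in> S" unfolding S_def by blast
    then show "s \<le> drop k l" using Mmin sM by simp
  qed
  show rsuf: "\<forall>k. 0 < k \<and> k < length r \<longrightarrow> s \<le> drop k r"
  proof (intro allI impI)
    fix k assume k: "0 < k \<and> k < length r"
    define x where "x = drop k r"
    have xne: "x \<noteq> []" using k x_def by simp
    have xs: "x @ s = drop k l" using lrs k x_def by simp
    moreover have "k < length l" using k lrs by simp
    ultimately have "s \<le> x @ s" using smin k by metis
    moreover have "x @ s \<noteq> s" using xne by simp
    ultimately have sxs: "s < x @ s" by (metis le_neq_trans)
    show "s \<le> drop k r"
    proof (rule ccontr)
      assume "\<not> s \<le> drop k r"
      then have xlt: "x < s" using x_def by simp
      show False
      proof (cases "\<exists>z. s = x @ z")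
        case True
        then obtain y where y: "s = x @ y" by blast
        then have "y \<noteq> []" using xlt by auto
        then have "s < drop (length x) s" using lys y xne by (intro lyndon_drop) auto
        then have "s < y" using y by simp
        moreover have "y < s" using sxs y by simp
        ultimately show False by simp
      next
        case False
        then have "x @ s < s" using less_append_notprefix1 xlt by blast
        then show False using sxs by simp
      qed
    qed
  qed
  show lyr: "lyndon r" unfolding lyndon_def lex_less_iff
  proof (intro conjI allI impI)
    show "r \<noteq> []" by (rule rne)
    fix k assume k: "0 < k \<and> k < length r"
    define x where "x = drop k r"
    have xne: "x \<noteq> []" using k x_def by simp
    have "l < drop k l" using ly k lrs by (intro lyndon_drop) auto
    then have lxs: "r @ s < x @ s" using lrs k x_def by simp
    show "r < drop k r"
    proof (rule ccontr)
      assume "\<not> r < drop k r"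
      then have "x \<le> r" using x_def by simp
      moreover have "length x \<noteq> length r" using k x_def by auto
      then have "x \<noteq> r" by metis
      ultimately have xr: "x < r" by simp
      show False
      proof (cases "\<exists>z. r = x @ z")
        case True
        then obtain y where y: "r = x @ y" by blast
        have "y @ s < s" using lxs y by simp
        moreover have "s \<le> y @ s"
        proof -
          have "y @ s = drop (length x) l" using lrs y by simp
          moreover have "0 < length x" "length x < length l" using xne lrs y sne by auto
          ultimately show ?thesis using smin by simp
        qed
        ultimately show False by simp
      next
        case False
        then have "x @ s < r @ s" using less_append_notprefix xr by blast
        then show False using lxs by simp
      qed
    qed
  qed
  show "r < s"
  proof -
    have "r < l" using lrs sne prefix_less by blast
    moreover have "l < drop (length r) l" using ly lrs rne sne by (intro lyndon_drop) auto
    ultimately show ?thesis using lrs by simp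
  qed
qed



definition sufge :: "'a::linorder list \<Rightarrow> 'a list \<Rightarrow> bool" where
  "sufge e X \<longleftrightarrow> (\<forall>k < length X. e \<le> drop k X)"

definition psufge :: "'a::linorder list \<Rightarrow> 'a list \<Rightarrow> bool" where
  "psufge e X \<longleftrightarrow> (\<forall>k. 0 < k \<and> k < length X \<longrightarrow> e \<le> drop k X)"

lemma sufge_lyndon: "lyndon f \<Longrightarrow> e \<le> f \<Longrightarrow> sufge e f"
  unfolding sufge_def using lyndon_suffix_ge order.trans by blast

lemma psufge_lyndon: "lyndon f \<Longrightarrow> e \<le> f \<Longrightarrow> psufge e f"
  unfolding psufge_def using lyndon_suffix_ge order.trans by blast

lemma psufge_mono: "e \<le> e' \<Longrightarrow> psufge e' X \<Longrightarrow> psufge e X"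
  unfolding psufge_def using order.trans by blast

lemma sufge_append: "sufge e X \<Longrightarrow> sufge e Y \<Longrightarrow> sufge e (X @ Y)"
  unfolding sufge_def
proof (intro allI impI)
  fix k assume X: "\<forall>k<length X. e \<le> drop k X" and Y: "\<forall>k<length Y. e \<le> drop k Y"
    and k: "k < length (X @ Y)"
  show "e \<le> drop k (X @ Y)"
  proof (cases "k < length X")
    case True
    then have "e \<le> drop k X" using X by simp
    then have "e \<le> drop k X @ Y" by (rule le_append_right)
    then show ?thesis using True by simp
  next
    case False
    then have "drop k (X @ Y) = drop (k - length X) Y" by simp
    moreover have "k - length X < length Y" using k False by simp
    ultimately show ?thesis using Y by simp
  qed
qed

lemma sufge_concat: "\<forall>f\<in>set fs. lyndon f \<and> e \<le> f \<Longrightarrow> sufge e (concat fs)"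
proof (induct fs)
  case Nil then show ?case by (simp add: sufge_def)
next
  case (Cons f fs) then show ?case by (auto intro: sufge_append sufge_lyndon)
qed

lemma psufge_append: "psufge e A \<Longrightarrow> sufge e B \<Longrightarrow> psufge e (A @ B)"
  unfolding psufge_def sufge_def
proof (intro allI impI)
  fix k assume A: "\<forall>k. 0 < k \<and> k < length A \<longrightarrow> e \<le> drop k A" and B: "\<forall>k<length B. e \<le> drop k B"
    and k: "0 < k \<and> k < length (A @ B)"
  show "e \<le> drop k (A @ B)"
  proof (cases "k < length A")
    case True
    then have "e \<le> drop k A" using A k by simp
    then have "e \<le> drop k A @ B" by (rule le_append_right)
    then show ?thesis using True by simp
  next
    case False
    then have "drop k (A @ B) = drop (k - length A) B" by simp
    moreover have "k < length A + length B" using k by simp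
    then have "k - length A < length B" using False by arith
    ultimately show ?thesis using B by simp
  qed
qed

lemma minsuf_intro:
  assumes "psufge e A" "A \<noteq> []" "sufge e B" "lyndon e"
  shows "min_suffix (A @ B @ e) e"
proof -
  have ene: "e \<noteq> []" using assms(4) lyndon_ne by blast
  have "psufge e (A @ (B @ e))"
    using psufge_append[OF assms(1) sufge_append[OF assms(3) sufge_lyndon[OF assms(4) order.refl]]] .
  then have all: "\<forall>k. 0 < k \<and> k < length (A @ B @ e) \<longrightarrow> e \<le> drop k (A @ B @ e)"
    unfolding psufge_def by simp
  have "0 < length A + length B" "length A + length B < length (A @ B @ e)"
    "e = drop (length A + length B) (A @ B @ e)" using assms(2) ene by auto
  then show ?thesis unfolding min_suffix_def lex_le_iff using all by blast
qed

lemma lemK_concat: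
  fixes s P :: "'a::linorder list"
  assumes "lyndon s" "P \<noteq> []" "P < s" "\<forall>e\<in>set xs. e \<le> s"
  shows "P @ concat xs < s"
  using assms(2-4)
proof (induct xs arbitrary: P)
  case Nil then show ?case by simp
next
  case (Cons x xs)
  have "P @ x < s" using lemK[OF assms(1)] Cons.prems by simp
  then have "(P @ x) @ concat xs < s" using Cons.hyps[of "P @ x"] Cons.prems by simp
  then show ?case by simp
qed

lemma isf_intro:
  assumes "lyndon l" "2 \<le> length l" "l = r @ x @ concat ys" "min_suffix (r @ x) x"
    "\<forall>t < length ys. min_suffix (r @ x @ concat (take t ys) @ ys ! t) (ys ! t)"
    "\<forall>y\<in>set ys. even (length y) \<and> less_inf y u"
    "odd (length x) \<or> inf_le u x"
  shows "isf u l r (x # ys)"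
  unfolding isf_def
proof (intro conjI allI impI)
  fix t assume t: "t < length (x # ys)"
  show "min_suffix (r @ concat (take (Suc t) (x # ys))) ((x # ys) ! t)"
  proof (cases t)
    case 0 then show ?thesis using assms(4) by simp
  next
    case (Suc t')
    then have "t' < length ys" using t by simp
    then have "concat (take (Suc t') ys) = concat (take t' ys) @ ys ! t'"
      by (simp add: take_Suc_conv_app_nth)
    then show ?thesis using assms(5) Suc \<open>t' < length ys\<close> by simp
  qed
next
  fix t assume t: "0 < t \<and> t < length (x # ys)"
  then obtain t' where "t = Suc t'" "t' < length ys" by (cases t) auto
  then have "(x # ys) ! t \<in> set ys" by simp
  then show "even (length ((x # ys) ! t))" "less_inf ((x # ys) ! t) u" using assms(6) by auto
qed (use assms in auto)

lemma omega_S: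
  assumes "Ep \<noteq> []" "lfact Op = os" "lfact Ep = e1 # es'"
    "inf_less (if os = [] then None else Some (last os)) e1"
  shows "omega_step (Op, Ep) (Op @ e1, concat es')"
  using assms unfolding omega_step_def Let_def by auto

lemma omega_PF:
  assumes "Ep \<noteq> []" "lfact Op = os" "lfact Ep = e1 # es'"
    "oh = (if os = [] then None else Some (last os))"
    "\<not> inf_less oh e1" "isf oh e1 r ss"
    "if inf_le oh (hd ss)
     then Q = (concat (butlast os) @ r @ hd ss @ the oh, concat (tl ss) @ concat es')
     else Q = (Op @ hd ss @ r, concat (tl ss) @ concat es')"
  shows "omega_step (Op, Ep) Q"
proof -
  have oh': "(if length os = 0 then None else Some (last os)) = oh" using assms(4) by simp
  show ?thesis unfolding omega_step_def Let_def fst_conv snd_conv assms(2) assms(3) oh' list.sel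
      if_not_P[OF assms(5)]
    using assms(1,6,7) by blast
qed



lemma sw_snoc: "sorted_wrt (\<lambda>x y. y \<le> x) (pre @ [om]) \<Longrightarrow> x \<in> set pre \<Longrightarrow> om \<le> x"
  for om :: "'a::linorder list"
  by (simp add: sorted_wrt_append)

lemma sw_last: "sorted_wrt (\<lambda>x y. y \<le> x) pre \<Longrightarrow> x \<in> set pre \<Longrightarrow> last pre \<le> x"
  for pre :: "'a::linorder list list"
  by (cases pre rule: rev_cases) (auto simp: sorted_wrt_append)

lemma psi_val:
  assumes "lfact Ow = pre @ [om]" "std_split om = (r, s)" "pre = [] \<longrightarrow> 2 \<le> length om"
  shows "psi (Ow, E) = (if 2 \<le> length om \<and> less_inf s (if pre = [] then None else Some (last pre))
     then (if odd (length r) then (concat pre @ r, s @ E) else (concat pre @ s, r @ E))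
     else (concat (butlast pre), om @ last pre @ E))"
proof (cases "pre = []")
  case True
  then show ?thesis using assms by (simp add: psi_def Let_def)
next
  case False
  have a: "(pre @ [om]) ! (length pre - Suc 0) = last pre"
    using False by (simp add: nth_append last_conv_nth)
  have b: "take (length pre - Suc 0) (pre @ [om]) = butlast pre"
    by (simp add: butlast_conv_take)
  show ?thesis using assms False a b by (simp add: psi_def Let_def)
qed

definition bnd :: "'a::linorder list list \<Rightarrow> 'a list \<Rightarrow> bool" where
  "bnd fs e \<longleftrightarrow> (2 \<le> length fs \<longrightarrow> e \<le> fs ! (length fs - 2)) \<and> (fs \<noteq> [] \<longrightarrow> psufge e (last fs))"

lemma bnd_snoc: "bnd (pre @ [om]) e \<longleftrightarrow> (pre \<noteq> [] \<longrightarrow> e \<le> last pre) \<and> psufge e om"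
  by (cases pre rule: rev_cases) (auto simp: bnd_def nth_append)

definition INV :: "'a::linorder list \<times> 'a list \<Rightarrow> bool" where
  "INV p \<longleftrightarrow> (\<forall>f\<in>set (lfact (fst p)). odd (length f)) \<and> distinct (lfact (fst p)) \<and>
     (\<forall>e\<in>set (lfact (snd p)). even (length e) \<and> bnd (lfact (fst p)) e)"

lemma case_S:
  fixes Ow E r s om :: "'a::linorder list"
  assumes okO: "lf_ok Ow (pre @ [om])" and oddO: "\<forall>f\<in>set (pre @ [om]). odd (length f)"
    and dO: "distinct (pre @ [om])"
    and okE: "lf_ok E es"
    and hE: "\<forall>e\<in>set es. even (length e) \<and> (pre \<noteq> [] \<longrightarrow> e \<le> last pre) \<and> psufge e om"
    and len: "2 \<le> length om" and sp: "std_split om = (r, s)"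
    and spl: "pre \<noteq> [] \<longrightarrow> s < last pre" and odr: "odd (length r)"
  shows "INV (concat pre @ r, s @ E) \<and> omega_step (concat pre @ r, s @ E) (Ow, E)"
proof -
  have lyom: "lyndon om" using okO by (simp add: lf_ok_def)
  note st = std_split_props[OF lyom len sp]
  have Oeq: "Ow = concat pre @ om" using okO by (simp add: lf_ok_def)
  have sw: "sorted_wrt (\<lambda>x y. y \<le> x) (pre @ [om])" using okO by (simp add: lf_ok_def)
  have lypre: "\<forall>f\<in>set pre. lyndon f" using okO by (simp add: lf_ok_def)
  have omle: "\<forall>x\<in>set pre. om \<le> x" using sw sw_snoc by blast
  have rom: "r < om" using st(1,3) prefix_less by metis
  have rlt: "\<forall>x\<in>set pre. r < x" using rom omle by (auto intro: less_le_trans)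
  have esle: "\<forall>e\<in>set es. e \<le> s"
  proof
    fix e assume "e \<in> set es"
    then have "psufge e om" using hE by blast
    moreover have "0 < length r" "length r < length om" using st(1,2,3) by auto
    ultimately have "e \<le> drop (length r) om" unfolding psufge_def by blast
    then show "e \<le> s" using st(1) by simp
  qed
  have okO': "lf_ok (concat pre @ r) (pre @ [r])"
    using okO st(7) rlt by (auto simp: lf_ok_def sorted_wrt_append less_imp_le)
  have okE': "lf_ok (s @ E) (s # es)"
    using okE st(4) esle by (auto simp: lf_ok_def)
  have lfO': "lfact (concat pre @ r) = pre @ [r]" using okO' by (rule lfact_eq)
  have lfE': "lfact (s @ E) = s # es" using okE' by (rule lfact_eq)
  have evs: "even (length s)" using oddO odr st(1) by auto
  have psr: "psufge s r" using st(6) unfolding psufge_def by blast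
  have inv: "INV (concat pre @ r, s @ E)"
    unfolding INV_def fst_conv snd_conv lfO' lfE' bnd_snoc
  proof (intro conjI ballI)
    show "\<And>f. f \<in> set (pre @ [r]) \<Longrightarrow> odd (length f)" using oddO odr by auto
    show "distinct (pre @ [r])" using dO rlt by auto
    fix e assume e: "e \<in> set (s # es)"
    then have es: "e \<le> s" using esle by auto
    show "even (length e)" using e evs hE by auto
    show "pre \<noteq> [] \<longrightarrow> e \<le> last pre" using es spl by auto
    show "psufge e r" using psufge_mono[OF es psr] .
  qed
  have "omega_step (concat pre @ r, s @ E) ((concat pre @ r) @ s, concat es)"
    using st(3,8) lfO' lfE' by (intro omega_S) auto
  moreover have "(concat pre @ r) @ s = Ow" "concat es = E" using Oeq st(1) okE by (auto simp: lf_ok_def)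
  ultimately show ?thesis using inv by simp
qed


lemma ev_concat: "\<forall>x\<in>set xs. even (length x) \<Longrightarrow> even (length (concat xs))"
  by (induct xs) auto

lemma take_ge: "sorted_wrt (\<lambda>x y. y \<le> x) es \<Longrightarrow> t < length es \<Longrightarrow> f \<in> set (take t es) \<Longrightarrow> es ! t \<le> f"
  for es :: "'a::linorder list list"
proof -
  assume sw: "sorted_wrt (\<lambda>x y. y \<le> x) es" and t: "t < length es" and f: "f \<in> set (take t es)"
  then obtain j where j: "j < length (take t es)" "f = take t es ! j" by (auto simp: in_set_conv_nth)
  then have "j < t" "f = es ! j" by auto
  then show "es ! t \<le> f" using sorted_wrt_nth_less[OF sw _ t] by blast
qed

lemma case_P:
  fixes Ow E r s om :: "'a::linorder list"
  assumes okO: "lf_ok Ow (pre @ [om])" and oddO: "\<forall>f\<in>set (pre @ [om]). odd (length f)"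
    and dO: "distinct (pre @ [om])"
    and okE: "lf_ok E es"
    and hE: "\<forall>e\<in>set es. even (length e) \<and> (pre \<noteq> [] \<longrightarrow> e \<le> last pre) \<and> psufge e om"
    and len: "2 \<le> length om" and sp: "std_split om = (r, s)"
    and spl: "pre \<noteq> [] \<longrightarrow> s < last pre" and evr: "even (length r)"
  shows "INV (concat pre @ s, r @ E) \<and> omega_step (concat pre @ s, r @ E) (Ow, E)"
proof -
  have lyom: "lyndon om" using okO by (simp add: lf_ok_def)
  note st = std_split_props[OF lyom len sp]
  have Oeq: "Ow = concat pre @ om" using okO by (simp add: lf_ok_def)
  have sw: "sorted_wrt (\<lambda>x y. y \<le> x) (pre @ [om])" using okO by (simp add: lf_ok_def)
  have swpre: "sorted_wrt (\<lambda>x y. y \<le> x) pre" using sw by (simp add: sorted_wrt_append)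
  have swes: "sorted_wrt (\<lambda>x y. y \<le> x) es" using okE by (simp add: lf_ok_def)
  have lyes: "\<forall>f\<in>set es. lyndon f" using okE by (simp add: lf_ok_def)
  have Eeq: "concat es = E" using okE by (simp add: lf_ok_def)
  have esle: "\<forall>e\<in>set es. e \<le> s"
  proof
    fix e assume "e \<in> set es"
    then have "psufge e om" using hE by blast
    moreover have "0 < length r" "length r < length om" using st(1,2,3) by auto
    ultimately have "e \<le> drop (length r) om" unfolding psufge_def by blast
    then show "e \<le> s" using st(1) by simp
  qed
  have ods: "odd (length s)" using oddO evr st(1) by auto
  have eslt: "\<forall>e\<in>set es. e < s"
  proof
    fix e assume e: "e \<in> set es"
    then have "e \<noteq> s" using hE ods by auto
    then show "e < s" using esle e by (metis le_neq_trans)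
  qed
  have spre: "\<forall>x\<in>set pre. s < x"
  proof
    fix x assume x: "x \<in> set pre"
    then have "pre \<noteq> []" by auto
    then have "s < last pre" using spl by simp
    moreover have "last pre \<le> x" using sw_last[OF swpre x] .
    ultimately show "s < x" by simp
  qed
  have okO': "lf_ok (concat pre @ s) (pre @ [s])"
    using okO st(4) spre by (auto simp: lf_ok_def sorted_wrt_append less_imp_le)
  have lfO': "lfact (concat pre @ s) = pre @ [s]" using okO' by (rule lfact_eq)
  obtain i where i: "i \<le> length es" "mrg r es = (r @ concat (take i es)) # drop i es"
    using mrg_form by blast
  define F1 where "F1 = r @ concat (take i es)"
  have okE': "lf_ok (r @ E) (F1 # drop i es)" using mrg_ok[OF st(7) okE] i F1_def by simp
  have lfE': "lfact (r @ E) = F1 # drop i es" using okE' by (rule lfact_eq)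
  have lyF1: "lyndon F1" using okE' by (simp add: lf_ok_def)
  have takele: "\<forall>e\<in>set (take i es). e \<le> s" using esle by (meson in_set_takeD)
  have F1lt: "F1 < s" unfolding F1_def using lemK_concat[OF st(4) st(2) st(8) takele] .
  have rlen: "2 \<le> length r"
  proof -
    have "length r \<noteq> 0" using st(2) by simp
    moreover have "length r \<noteq> 1" using evr by auto
    ultimately show ?thesis by linarith
  qed
  obtain rj sj where spr: "std_split r = (rj, sj)" by fastforce
  note st2 = std_split_props[OF st(7) rlen spr]
  have sjge: "s \<le> sj"
  proof -
    have "0 < length rj" "length rj < length r" using st2(1,2,3) by auto
    then have "s \<le> drop (length rj) r" using st(6) by blast
    then show ?thesis using st2(1) by simp
  qed
  have inv: "INV (concat pre @ s, r @ E)"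
    unfolding INV_def fst_conv snd_conv lfO' lfE' bnd_snoc
  proof (intro conjI ballI)
    show "\<And>f. f \<in> set (pre @ [s]) \<Longrightarrow> odd (length f)" using oddO ods by auto
    show "distinct (pre @ [s])" using dO spre by auto
    fix e assume e: "e \<in> set (F1 # drop i es)"
    have elt: "e < s"
      using e F1lt eslt by (auto dest: in_set_dropD)
    show "even (length e)"
    proof (cases "e = F1")
      case True
      have "\<forall>x\<in>set (take i es). even (length x)" using hE by (meson in_set_takeD)
      then have "even (length (concat (take i es)))" by (rule ev_concat)
      then show ?thesis using True evr F1_def by simp
    next
      case False
      then have "e \<in> set es" using e by (auto dest: in_set_dropD)
      then show ?thesis using hE by blast
    qed
    show "pre \<noteq> [] \<longrightarrow> e \<le> last pre" using elt spl by auto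
    show "psufge e s" using psufge_lyndon[OF st(4)] elt by simp
  qed
  have isf: "isf (Some s) F1 rj (sj # take i es)"
  proof (rule isf_intro)
    show "lyndon F1" by (rule lyF1)
    show "2 \<le> length F1" using rlen F1_def by simp
    show "F1 = rj @ sj @ concat (take i es)" using F1_def st2(1) by simp
    have "min_suffix (rj @ [] @ sj) sj"
      using st2(2,4,6) by (intro minsuf_intro) (auto simp: psufge_def sufge_def)
    then show "min_suffix (rj @ sj) sj" by simp
    show "\<forall>t<length (take i es). min_suffix (rj @ sj @ concat (take t (take i es)) @ take i es ! t) (take i es ! t)"
    proof (intro allI impI)
      fix t assume t: "t < length (take i es)"
      then have ti: "t < i" "t < length es" by auto
      define e where "e = es ! t"
      have eq1: "take i es ! t = e" using ti e_def by simp
      have eq2: "take t (take i es) = take t es" using ti by (simp add: min_absorb1)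
      have ein: "e \<in> set es" using ti e_def by simp
      have "psufge e r"
      proof -
        have "psufge s r" using st(6) unfolding psufge_def by blast
        then show ?thesis using psufge_mono eslt ein less_imp_le by blast
      qed
      moreover have "sufge e (concat (take t es))"
      proof (rule sufge_concat, intro ballI conjI)
        fix f assume f: "f \<in> set (take t es)"
        then show "lyndon f" using lyes by (meson in_set_takeD)
        show "e \<le> f" using take_ge[OF swes ti(2) f] e_def by simp
      qed
      ultimately have "min_suffix (r @ concat (take t es) @ e) e"
        using st(2) lyes ein by (intro minsuf_intro) auto
      then show "min_suffix (rj @ sj @ concat (take t (take i es)) @ take i es ! t) (take i es ! t)"
        using eq1 eq2 st2(1) by simp
    qed
    show "\<forall>y\<in>set (take i es). even (length y) \<and> less_inf y (Some s)"
      using hE eslt by (auto dest: in_set_takeD)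
    show "odd (length sj) \<or> inf_le (Some s) sj" using sjge by simp
  qed
  have "omega_step (concat pre @ s, r @ E) (Ow, E)"
  proof (rule omega_PF[OF _ lfO' lfE' _ _ isf])
    show "r @ E \<noteq> []" using st(2) by simp
    show "Some s = (if pre @ [s] = [] then None else Some (last (pre @ [s])))" by simp
    show "\<not> inf_less (Some s) F1" using F1lt by simp
    have "concat (take i es) @ concat (drop i es) = E" using Eeq
      by (metis append_take_drop_id concat_append)
    then show "if inf_le (Some s) (hd (sj # take i es))
      then (Ow, E) = (concat (butlast (pre @ [s])) @ rj @ hd (sj # take i es) @ the (Some s),
             concat (tl (sj # take i es)) @ concat (drop i es))
      else (Ow, E) = ((concat pre @ s) @ hd (sj # take i es) @ rj,
             concat (tl (sj # take i es)) @ concat (drop i es))"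
      using sjge Oeq st(1) st2(1) by simp
  qed
  then show ?thesis using inv by simp
qed


lemma bnd_of_le:
  assumes "sorted_wrt (\<lambda>x y. y \<le> x) fs" "\<forall>f\<in>set fs. lyndon f" "fs \<noteq> [] \<longrightarrow> e \<le> last fs"
  shows "bnd fs e"
proof (cases fs rule: rev_cases)
  case Nil then show ?thesis by (simp add: bnd_def)
next
  case (snoc pq oq)
  have eoq: "e \<le> oq" using assms(3) snoc by simp
  have "pq \<noteq> [] \<longrightarrow> e \<le> last pq"
  proof
    assume "pq \<noteq> []"
    then have "oq \<le> last pq" using assms(1) snoc by (simp add: sorted_wrt_append)
    then show "e \<le> last pq" using eoq by simp
  qed
  moreover have "lyndon oq" using assms(2) snoc by simp
  then have "psufge e oq" using psufge_lyndon eoq by blast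
  ultimately show ?thesis using snoc bnd_snoc by blast
qed

lemma case_F:
  fixes Ow E op om :: "'a::linorder list"
  assumes okO: "lf_ok Ow (pre' @ [op, om])" and oddO: "\<forall>f\<in>set (pre' @ [op, om]). odd (length f)"
    and dO: "distinct (pre' @ [op, om])"
    and okE: "lf_ok E es"
    and hE: "\<forall>e\<in>set es. even (length e) \<and> e \<le> op \<and> psufge e om"
    and nsp: "psufge op om"
  shows "INV (concat pre', om @ op @ E) \<and> omega_step (concat pre', om @ op @ E) (Ow, E)"
proof -
  have lyom: "lyndon om" and lyop: "lyndon op" using okO by (auto simp: lf_ok_def)
  have lypre: "\<forall>f\<in>set pre'. lyndon f" using okO by (simp add: lf_ok_def)
  have Oeq: "Ow = concat pre' @ op @ om" using okO by (simp add: lf_ok_def)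
  have sw: "sorted_wrt (\<lambda>x y. y \<le> x) (pre' @ [op, om])" using okO by (simp add: lf_ok_def)
  have swpre: "sorted_wrt (\<lambda>x y. y \<le> x) pre'" using sw by (simp add: sorted_wrt_append)
  have swes: "sorted_wrt (\<lambda>x y. y \<le> x) es" using okE by (simp add: lf_ok_def)
  have lyes: "\<forall>f\<in>set es. lyndon f" using okE by (simp add: lf_ok_def)
  have Eeq: "concat es = E" using okE by (simp add: lf_ok_def)
  have omop: "om < op" using sw dO by (auto simp: sorted_wrt_append intro: le_neq_trans)
  have opx: "\<forall>x\<in>set pre'. op < x" using sw dO by (auto simp: sorted_wrt_append intro: le_neq_trans)
  have omne: "om \<noteq> []" using lyom lyndon_ne by blast
  have opne: "op \<noteq> []" using lyop lyndon_ne by blast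
  have lyoo: "lyndon (om @ op)" using lyndon_app[OF lyom lyop omop] .
  obtain i where i: "i \<le> length es" "mrg (om @ op) es = ((om @ op) @ concat (take i es)) # drop i es"
    using mrg_form by blast
  define F1 where "F1 = om @ op @ concat (take i es)"
  have okE': "lf_ok (om @ op @ E) (F1 # drop i es)" using mrg_ok[OF lyoo okE] i F1_def by simp
  have lfE': "lfact (om @ op @ E) = F1 # drop i es" using okE' by (rule lfact_eq)
  have lyF1: "lyndon F1" using okE' by (simp add: lf_ok_def)
  have okO': "lf_ok (concat pre') pre'" using okO by (simp add: lf_ok_def sorted_wrt_append)
  have lfO': "lfact (concat pre') = pre'" using okO' by (rule lfact_eq)
  have esop: "\<forall>e\<in>set es. e \<le> op" using hE by blast
  have F1lt: "pre' \<noteq> [] \<Longrightarrow> F1 < last pre'"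
  proof -
    assume pne: "pre' \<noteq> []"
    define oq where "oq = last pre'"
    have oqin: "oq \<in> set pre'" using pne oq_def by simp
    have lyoq: "lyndon oq" using lypre oqin by blast
    have opoq: "op < oq" using opx oqin by blast
    have "\<forall>e\<in>set (op # take i es). e \<le> oq"
      using opoq esop by (auto dest: in_set_takeD intro: order.trans less_imp_le)
    from lemK_concat[OF lyoq omne _ this] omop opoq
    show "F1 < last pre'" unfolding F1_def oq_def by simp
  qed
  have newlt: "\<forall>e\<in>set (F1 # drop i es). pre' \<noteq> [] \<longrightarrow> e < last pre'"
  proof (intro ballI impI)
    fix e assume e: "e \<in> set (F1 # drop i es)" and pne: "pre' \<noteq> []"
    show "e < last pre'"
    proof (cases "e = F1")
      case True then show ?thesis using F1lt pne by simp
    next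
      case False
      then have "e \<in> set es" using e by (auto dest: in_set_dropD)
      then have "e \<le> op" using esop by blast
      moreover have "op < last pre'" using opx pne by simp
      ultimately show ?thesis by simp
    qed
  qed
  have inv: "INV (concat pre', om @ op @ E)"
    unfolding INV_def fst_conv snd_conv lfO' lfE'
  proof (intro conjI ballI)
    show "\<And>f. f \<in> set pre' \<Longrightarrow> odd (length f)" using oddO by auto
    show "distinct pre'" using dO by simp
    fix e assume e: "e \<in> set (F1 # drop i es)"
    show "even (length e)"
    proof (cases "e = F1")
      case True
      have "\<forall>x\<in>set (take i es). even (length x)" using hE by (meson in_set_takeD)
      then have "even (length (concat (take i es)))" by (rule ev_concat)
      moreover have "odd (length om)" "odd (length op)" using oddO by auto
      ultimately show ?thesis using True F1_def by simp
    next
      case False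
      then have "e \<in> set es" using e by (auto dest: in_set_dropD)
      then show ?thesis using hE by blast
    qed
    show "bnd pre' e" using bnd_of_le[OF swpre lypre] newlt e less_imp_le by blast
  qed
  define oh where "oh = (if pre' = [] then None else Some (last pre'))"
  have isf: "isf oh F1 om (op # take i es)"
  proof (rule isf_intro)
    show "lyndon F1" by (rule lyF1)
    show "2 \<le> length F1" using omne opne F1_def by (cases om; cases op) auto
    show "F1 = om @ op @ concat (take i es)" using F1_def by simp
    have "min_suffix (om @ [] @ op) op"
      using nsp omne lyop by (intro minsuf_intro) (auto simp: sufge_def)
    then show "min_suffix (om @ op) op" by simp
    show "\<forall>t<length (take i es). min_suffix (om @ op @ concat (take t (take i es)) @ take i es ! t) (take i es ! t)"
    proof (intro allI impI)
      fix t assume t: "t < length (take i es)"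
      then have ti: "t < i" "t < length es" by auto
      define e where "e = es ! t"
      have eq1: "take i es ! t = e" using ti e_def by simp
      have eq2: "take t (take i es) = take t es" using ti by (simp add: min_absorb1)
      have ein: "e \<in> set es" using ti e_def by simp
      have eop: "e \<le> op" using esop ein by blast
      have "psufge e om" using psufge_mono[OF eop nsp] .
      moreover have "sufge e (op @ concat (take t es))"
      proof (rule sufge_append)
        show "sufge e op" using sufge_lyndon[OF lyop eop] .
        show "sufge e (concat (take t es))"
        proof (rule sufge_concat, intro ballI conjI)
          fix f assume f: "f \<in> set (take t es)"
          then show "lyndon f" using lyes by (meson in_set_takeD)
          show "e \<le> f" using take_ge[OF swes ti(2) f] e_def by simp
        qed
      qed
      ultimately have "min_suffix (om @ (op @ concat (take t es)) @ e) e"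
        using omne lyes ein by (intro minsuf_intro) auto
      then show "min_suffix (om @ op @ concat (take t (take i es)) @ take i es ! t) (take i es ! t)"
        using eq1 eq2 by simp
    qed
    show "\<forall>y\<in>set (take i es). even (length y) \<and> less_inf y oh"
    proof
      fix y assume y: "y \<in> set (take i es)"
      then have yes: "y \<in> set es" by (meson in_set_takeD)
      have "less_inf y oh"
      proof (cases "pre' = []")
        case True then show ?thesis using oh_def by simp
      next
        case False
        then have "op < last pre'" using opx by simp
        moreover have "y \<le> op" using esop yes by blast
        ultimately show ?thesis using oh_def False by simp
      qed
      then show "even (length y) \<and> less_inf y oh" using hE yes by blast
    qed
    show "odd (length op) \<or> inf_le oh op" using oddO by simp
  qed
  have "omega_step (concat pre', om @ op @ E) (Ow, E)"
  proof (rule omega_PF[OF _ lfO' lfE' _ _ isf])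
    show "om @ op @ E \<noteq> []" using omne by simp
    show "oh = (if pre' = [] then None else Some (last pre'))" by (rule oh_def)
    show "\<not> inf_less oh F1"
      using F1lt oh_def by (cases "pre' = []") auto
    have nle: "\<not> inf_le oh op"
    proof (cases "pre' = []")
      case True then show ?thesis using oh_def by simp
    next
      case False
      then have "op < last pre'" using opx by simp
      then show ?thesis using oh_def False by (simp add: not_le)
    qed
    have "concat (take i es) @ concat (drop i es) = E" using Eeq
      by (metis append_take_drop_id concat_append)
    then show "if inf_le oh (hd (op # take i es))
      then (Ow, E) = (concat (butlast pre') @ om @ hd (op # take i es) @ the oh,
             concat (tl (op # take i es)) @ concat (drop i es))
      else (Ow, E) = (concat pre' @ hd (op # take i es) @ om,
             concat (tl (op # take i es)) @ concat (drop i es))"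
      using nle Oeq by simp
  qed
  then show ?thesis using inv by simp
qed



lemma main_step:
  fixes Ow E :: "'a::linorder list"
  assumes inv: "INV (Ow, E)" and len: "2 \<le> length Ow"
  shows "INV (psi (Ow, E)) \<and> omega_step (psi (Ow, E)) (Ow, E)"
proof -
  define fs where "fs = lfact Ow"
  have okO: "lf_ok Ow fs" unfolding fs_def by (rule lfact_ok)
  have "fs \<noteq> []" using okO len by (auto simp: lf_ok_def)
  then obtain pre om where fsq: "fs = pre @ [om]" by (cases fs rule: rev_cases) auto
  define es where "es = lfact E"
  have okE: "lf_ok E es" unfolding es_def by (rule lfact_ok)
  have oddO: "\<forall>f\<in>set (pre @ [om]). odd (length f)" and dO: "distinct (pre @ [om])"
    using inv fsq unfolding INV_def fs_def by auto
  have hE: "\<forall>e\<in>set es. even (length e) \<and> (pre \<noteq> [] \<longrightarrow> e \<le> last pre) \<and> psufge e om"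
    using inv fsq unfolding INV_def fs_def es_def bnd_snoc[symmetric] by auto
  have okO2: "lf_ok Ow (pre @ [om])" using okO fsq by simp
  obtain r s where sp: "std_split om = (r, s)" by fastforce
  have prelen: "pre = [] \<longrightarrow> 2 \<le> length om" using okO2 len by (auto simp: lf_ok_def)
  have lfq: "lfact Ow = pre @ [om]" using fsq fs_def by simp
  note pv = psi_val[OF lfq sp prelen, of E]
  show ?thesis
  proof (cases "2 \<le> length om \<and> less_inf s (if pre = [] then None else Some (last pre))")
    case True
    then have len2: "2 \<le> length om" and spl: "pre \<noteq> [] \<longrightarrow> s < last pre" by auto
    show ?thesis
    proof (cases "odd (length r)")
      case odd: True
      then show ?thesis using pv True case_S[OF okO2 oddO dO okE hE len2 sp spl odd] by simp
    next
      case ev: False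
      then show ?thesis using pv True case_P[OF okO2 oddO dO okE hE len2 sp spl] by simp
    qed
  next
    case False
    then have pne: "pre \<noteq> []" using prelen by auto
    then obtain pre' op where pq: "pre = pre' @ [op]" by (cases pre rule: rev_cases) auto
    have nsp: "psufge op om"
    proof (cases "2 \<le> length om")
      case True
      with False pne pq have "\<not> s < op" by simp
      then have ops: "op \<le> s" by simp
      have lyom: "lyndon om" using okO2 by (simp add: lf_ok_def)
      note st = std_split_props[OF lyom True sp]
      show ?thesis unfolding psufge_def using st(5) ops order.trans by blast
    next
      case False
      then show ?thesis unfolding psufge_def by auto
    qed
    have okO3: "lf_ok Ow (pre' @ [op, om])" using okO2 pq by simp
    have hE3: "\<forall>e\<in>set es. even (length e) \<and> e \<le> op \<and> psufge e om" using hE pq by simp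
    have "INV (concat pre', om @ op @ E) \<and> omega_step (concat pre', om @ op @ E) (Ow, E)"
      using case_F[OF okO3 _ _ okE hE3 nsp] oddO dO pq by simp
    moreover have "psi (Ow, E) = (concat (butlast pre), om @ last pre @ E)"
      by (subst pv) (simp only: if_not_P[OF False])
    ultimately show ?thesis using pq by simp
  qed
qed

lemma run_inv: "psi_run w p \<Longrightarrow> w \<in> Wo n \<Longrightarrow> INV p"
proof (induct p rule: psi_run.induct)
  case start
  have "lfact ([] :: 'a list) = []" by (rule lfact_eq) (simp add: lf_ok_def)
  then show ?case using start unfolding INV_def Wo_def by simp
next
  case (step Ow Ew)
  then show ?case using main_step by blast
qed

theorem lemma4p22:
  fixes w :: "'a::{linorder, finite} list" and n :: nat and Ow Ew :: "'a list"
  assumes "w \<in> Wo n"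
    and "psi_run w (Ow, Ew)"
    and "2 \<le> length Ow"
  shows "omega_step (psi (Ow, Ew)) (Ow, Ew)"
  using main_step run_inv assms by blast

end
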